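(* Fix $n\ge 2$, a dictator agent $t$, another agent $i\ne t$, and a constant $a\in(0,\frac12)$. For $b\in(0,1)$ and a profile $\mathbf{x}$ with $x_l=\min\mathbf{x}$, $x_r=\max\mathbf{x}$, $L=x_r-x_l$, define $$h_b(\mathbf{x})=\begin{cases} x_t+\max\left\{\frac{2(1-b)}{b}(x_t-x_l),\; x_r-x_t\right\} & \text{if } x_t\in[x_l,\,x_l+bL),\\[2pt] x_t-\max\left\{x_t-x_l,\; \frac{2b}{1-b}(x_r-x_t)\right\} & \text{if } x_t\in[x_l+bL,\,x_r].\end{cases}$$ Let $f$ be the mechanism that on $\mathbf{x}$ outputs $l_1=x_t$ and $l_2=h_a(\mathbf{x})$ if $x_i\le x_t$, and $l_2=h_{1-a}(\mathbf{x})$ if $x_i>x_t$. Then $f$ is strategy-proof.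
   Context: Two-facility game on a line: agent $j\in\{1,\dots,n\}$ has location $x_j\in\mathbb{R}$. A mechanism outputs two facility locations $\{l_1,l_2\}$; an agent at $y$ has cost $\min\{|l_1-y|,|l_2-y|\}$. A mechanism $f$ is strategy-proof if for every agent $j$, every profile $\mathbf{x}=\langle x_j,\mathbf{x}_{-j}\rangle$ and every $x_j'\in\mathbb{R}$, the cost of agent $j$ (at true location $x_j$) under $f(x_j,\mathbf{x}_{-j})$ is at most her cost under $f(x_j',\mathbf{x}_{-j})$. *)

theory Defs
  imports Complex_Main
begin

text \<open>Agents are indexed by {1..n}; a profile is a function from agents to locations
  (values outside {1..n} are irrelevant). A mechanism maps a profile to a pair of
  facility locations (l1, l2).\<close>

definition agents :: "nat \<Rightarrow> nat set" where
  "agents n = {1..n}"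

definition cost :: "real \<times> real \<Rightarrow> real \<Rightarrow> real" where
  "cost ls y = min \<bar>fst ls - y\<bar> \<bar>snd ls - y\<bar>"

definition strategy_proof :: "nat \<Rightarrow> ((nat \<Rightarrow> real) \<Rightarrow> real \<times> real) \<Rightarrow> bool" where
  "strategy_proof n f \<longleftrightarrow>
     (\<forall>j\<in>agents n. \<forall>x :: nat \<Rightarrow> real. \<forall>x' :: real.
        cost (f x) (x j) \<le> cost (f (x(j := x'))) (x j))"

definition h :: "nat \<Rightarrow> nat \<Rightarrow> real \<Rightarrow> (nat \<Rightarrow> real) \<Rightarrow> real" where
  "h n t b x =
    (let xl = Min (x ` agents n); xr = Max (x ` agents n); L = xr - xl in
     if xl \<le> x t \<and> x t < xl + b * L
     then x t + max (2 * (1 - b) / b * (x t - xl)) (xr - x t)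
     else x t - max (x t - xl) (2 * b / (1 - b) * (xr - x t)))"

definition mech :: "nat \<Rightarrow> nat \<Rightarrow> nat \<Rightarrow> real \<Rightarrow> (nat \<Rightarrow> real) \<Rightarrow> real \<times> real" where
  "mech n t i a x = (x t, if x i \<le> x t then h n t a x else h n t (1 - a) x)"

end

theory Submission imports Defs begin
definition G :: "real \<Rightarrow> real \<Rightarrow> real \<Rightarrow> real \<Rightarrow> real" where
 "G k xt xl xr = (if xl \<le> xt \<and> xt - xl < k*(xr - xt) then xt + max (2*(xt-xl)/k) (xr-xt) else xt - max (xt-xl) (2*k*(xr-xt)))"

lemma coreR:
 assumes k: "0<k" "0<k'" and mt: "m \<le> xt" "xt \<le> M" and j: "xj > xt"
 and kk: "v \<le> xt \<Longrightarrow> k' \<le> k" "v > xt \<Longrightarrow> k' = k"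
 shows "min (abs (xt - xj)) (abs (G k xt (min m xj) (max M xj) - xj)) \<le> min (abs (xt - xj)) (abs (G k' xt (min m v) (max M v) - xj))"
proof -
  define d where "d = xj - xt"
  define p where "p = xt - m"
  define q where "q = max M xj - xt"
  define p' where "p' = xt - min m v"
  define q' where "q' = max M v - xt"
  have e1: "min m xj = m" using mt j by simp
  have d0: "d > 0" "(abs (xt - xj)) = d" using j by (auto simp: d_def)
  have p0: "p \<ge> 0" "p' \<ge> p" "p' \<ge> 0" using mt by (auto simp: p_def p'_def)
  have qd: "q \<ge> d" "q' \<ge> 0" using mt by (auto simp: q_def d_def q'_def)
  have l2: "G k xt (min m xj) (max M xj) = (if p < k*q then xt + max (2*p/k) q else xt - max p (2*k*q))"
    unfolding G_def e1 p_def q_def using mt by auto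
  have l2': "G k' xt (min m v) (max M v) = (if p' < k'*q' then xt + max (2*p'/k') q' else xt - max p' (2*k'*q'))"
    unfolding G_def p'_def q'_def using mt by auto
  show ?thesis
  proof (cases "p' < k'*q'")
    case False
    then show ?thesis unfolding l2' d0 using p0 by (auto simp: d_def)
  next
    case c1: True
    have D'a: "max (2*p'/k') q' \<ge> 2*p/k"
    proof (cases "v \<le> xt")
      case True
      then have "2*p/k \<le> 2*p'/k'" using kk k p0 by (intro divide_mono) auto
      then show ?thesis by simp
    next
      case False
      then show ?thesis using kk p0 by (simp add: p_def p'_def)
    qed
    show ?thesis
    proof (cases "p < k*q")
      case c0: True
      have "max (2*p'/k') q' \<ge> max (2*p/k) q \<or> max (2*p/k) q = d"
      proof (cases "xj \<le> M")
        case True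
        then have "q' \<ge> q" by (auto simp: q_def q'_def)
        then show ?thesis using D'a by (auto simp: max_def)
      next
        case False
        then have "q = d" by (auto simp: q_def d_def)
        then show ?thesis using D'a by auto
      qed
      moreover have "max (2*p/k) q \<ge> d" using qd by simp
      ultimately show ?thesis unfolding l2 l2' d0 using c0 c1 d0 by (auto simp: d_def)
    next
      case c0: False
      have "max (2*p'/k') q' \<ge> 2*d"
      proof (cases "v \<le> xt")
        case True
        have "q' \<le> q" using True mt by (auto simp: q_def q'_def)
        have "k'*q' \<le> k*q'" using kk(1)[OF True] qd by (simp add: mult_right_mono)
        also have "\<dots> \<le> k*q" using \<open>q' \<le> q\<close> k by (simp add: mult_left_mono)
        finally show ?thesis using c0 c1 p0 by linarith
      next
        case False
        have "k*d \<le> k*q" using qd k by (simp add: mult_left_mono)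
        then have "k*d \<le> p" using c0 by linarith
        then have "d \<le> p/k" using k by (simp add: field_simps)
        moreover have "2*p/k = 2*(p/k)" by simp
        ultimately show ?thesis using D'a by linarith
      qed
      then show ?thesis unfolding l2 l2' d0 using c0 c1 d0 p0 by (auto simp: d_def)
    qed
  qed
qed

lemma coreL:
 assumes k: "0<k" "0<k'" and mt: "m \<le> xt" "xt \<le> M" and j: "xj \<le> xt"
 and kk: "v > xt \<Longrightarrow> k \<le> k'" "v \<le> xt \<Longrightarrow> k' = k"
 shows "min (abs (xt - xj)) (abs (G k xt (min m xj) (max M xj) - xj)) \<le> min (abs (xt - xj)) (abs (G k' xt (min m v) (max M v) - xj))"
proof -
  define d where "d = xt - xj"
  define p where "p = xt - min m xj"
  define q where "q = M - xt"
  define p' where "p' = xt - min m v"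
  define q' where "q' = max M v - xt"
  have e1: "max M xj = M" using mt j by simp
  have d0: "d \<ge> 0" "\<bar>xt - xj\<bar> = d" using j by (auto simp: d_def)
  have p0: "p \<ge> d" "p' \<ge> 0" using mt by (auto simp: p_def p'_def d_def)
  have qd: "q \<ge> 0" "q' \<ge> q" using mt by (auto simp: q_def q'_def)
  have l2: "G k xt (min m xj) (max M xj) = (if p < k*q then xt + max (2*p/k) q else xt - max p (2*k*q))"
    unfolding G_def e1 p_def q_def using mt by auto
  have l2': "G k' xt (min m v) (max M v) = (if p' < k'*q' then xt + max (2*p'/k') q' else xt - max p' (2*k'*q'))"
    unfolding G_def p'_def q'_def using mt by auto
  have kq: "k*q \<le> k'*q'"
  proof (cases "v \<le> xt")
    case True
    then show ?thesis using kk qd k by (simp add: mult_left_mono)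
  next
    case False
    then show ?thesis using kk qd k by (intro mult_mono) auto
  qed
  show ?thesis
  proof (cases "p' < k'*q'")
    case True
    then show ?thesis unfolding l2' d0 using qd by (auto simp: d_def max_def)
  next
    case c1: False
    show ?thesis
    proof (cases "p < k*q")
      case c0: True
      have "v \<le> xt"
      proof (rule ccontr)
        assume "\<not> v \<le> xt"
        then have "p' \<le> p" using mt by (auto simp: p_def p'_def)
        then show False using c0 c1 kq by linarith
      qed
      then have "q' = q" "k' = k" using kk mt by (auto simp: q_def q'_def)
      then have "max p' (2*k'*q') \<ge> 2*d" using c0 p0 by simp
      then show ?thesis unfolding l2 l2' d0 using c0 c1 d0 p0 qd by (auto simp: d_def)
    next
      case c0: False
      have "max p' (2*k'*q') \<ge> max p (2*k*q) \<or> max p (2*k*q) = d"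
      proof (cases "xj \<ge> m")
        case True
        then have "p' \<ge> p" by (auto simp: p_def p'_def)
        then show ?thesis using kq by (auto simp: max_def)
      next
        case False
        then have "p = d" by (auto simp: p_def d_def)
        then show ?thesis using kq by (auto simp: max_def)
      qed
      moreover have "max p (2*k*q) \<ge> d" using p0 by simp
      ultimately show ?thesis unfolding l2 l2' d0 using c0 c1 d0 by (auto simp: d_def)
    qed
  qed
qed

lemma core:
 assumes k: "0<k" "0<k'" and mt: "m \<le> xt" "xt \<le> M"
 and kk: "xj > xt \<Longrightarrow> v \<le> xt \<Longrightarrow> k' \<le> k" "xj > xt \<Longrightarrow> v > xt \<Longrightarrow> k' = k"
    "xj \<le> xt \<Longrightarrow> v > xt \<Longrightarrow> k \<le> k'" "xj \<le> xt \<Longrightarrow> v \<le> xt \<Longrightarrow> k' = k"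
 shows "min (abs (xt - xj)) (abs (G k xt (min m xj) (max M xj) - xj)) \<le> min (abs (xt - xj)) (abs (G k' xt (min m v) (max M v) - xj))"
proof (cases "xj > xt")
  case True
  then show ?thesis using coreR[OF k mt True] kk by blast
next
  case False
  then show ?thesis using coreL[OF k mt] kk by (meson not_less)
qed

lemma kmono: "0 < (b::real) \<Longrightarrow> b \<le> b' \<Longrightarrow> b' < 1 \<Longrightarrow> b/(1-b) \<le> b'/(1-b')"
proof -
  assume h: "0 < b" "b \<le> b'" "b' < 1"
  have "b * (1 - b') \<le> b' * (1 - b)" using h by (simp add: algebra_simps)
  then show ?thesis using h by (simp add: divide_simps)
qed

lemma hG: assumes "0 < b" "b < 1"
  shows "h n t b x = G (b/(1-b)) (x t) (Min (x ` agents n)) (Max (x ` agents n))"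
proof -
  have c: "(x t < xl + b * (xr - xl)) = (x t - xl < b/(1-b) * (xr - x t))" for xl xr
  proof -
    have "(x t < xl + b * (xr - xl)) = ((1-b)*(x t - xl) < b * (xr - x t))" by (simp add: algebra_simps)
    also have "\<dots> = (x t - xl < b/(1-b) * (xr - x t))" using assms by (simp add: field_simps)
    finally show ?thesis .
  qed
  have e1: "2 * (1 - b) / b * y = 2 * y / (b/(1-b))" for y using assms by (simp add: field_simps)
  have e2: "2 * b / (1 - b) * y = 2 * (b/(1-b)) * y" for y by simp
  show ?thesis unfolding h_def G_def Let_def c e1 e2 ..
qed

lemma minmax:
  assumes "j \<in> agents n" "t \<in> agents n" "j \<noteq> t"
  shows "Min (x ` agents n) = min (Min (x ` (agents n - {j}))) (x j)"
    "Max (x ` agents n) = max (Max (x ` (agents n - {j}))) (x j)"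
    "Min (x ` (agents n - {j})) \<le> x t" "x t \<le> Max (x ` (agents n - {j}))"
proof -
  have f: "finite (x ` (agents n - {j}))" by (simp add: agents_def)
  have ne: "x ` (agents n - {j}) \<noteq> {}" using assms by auto
  have A: "x ` agents n = insert (x j) (x ` (agents n - {j}))" using assms by auto
  show "Min (x ` agents n) = min (Min (x ` (agents n - {j}))) (x j)"
    unfolding A using Min_insert[OF f ne] by (simp add: min.commute)
  show "Max (x ` agents n) = max (Max (x ` (agents n - {j}))) (x j)"
    unfolding A using Max_insert[OF f ne] by (simp add: max.commute)
  show "Min (x ` (agents n - {j})) \<le> x t" using f assms by (intro Min_le) auto
  show "x t \<le> Max (x ` (agents n - {j}))" using f assms by (intro Max_ge) auto
qed

theorem theorem7:
  fixes n t i :: nat and a :: real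
  assumes "n \<ge> 2" and "t \<in> agents n" and "i \<in> agents n" and "i \<noteq> t"
    and "0 < a" and "a < 1/2"
  shows "strategy_proof n (mech n t i a)"
  unfolding strategy_proof_def
proof (intro ballI allI)
  fix j x v
  assume j: "j \<in> agents n"
  show "cost (mech n t i a x) (x j) \<le> cost (mech n t i a (x(j := v))) (x j)"
  proof (cases "j = t")
    case True
    then show ?thesis by (simp add: cost_def mech_def)
  next
    case jt: False
    define y where "y = x(j := v)"
    define b where "b = (if x i \<le> x t then a else 1 - a)"
    define b' where "b' = (if y i \<le> y t then a else 1 - a)"
    have yt: "y t = x t" "y j = v" using jt by (auto simp: y_def)
    have bb: "0 < b" "b < 1" "0 < b'" "b' < 1" using assms by (auto simp: b_def b'_def)
    have m1: "mech n t i a x = (x t, h n t b x)" by (simp add: mech_def b_def)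
    have m2: "mech n t i a y = (x t, h n t b' y)" by (simp add: mech_def b'_def yt)
    have S: "y ` (agents n - {j}) = x ` (agents n - {j})" by (auto simp: y_def)
    note mmx = minmax[OF j assms(2) jt, of x] and mmy = minmax[OF j assms(2) jt, of y]
    define k where "k = b/(1-b)"
    define k' where "k' = b'/(1-b')"
    have kp: "0 < k" "0 < k'" using bb by (auto simp: k_def k'_def)
    have bcond: "(x j > x t \<longrightarrow> v \<le> x t \<longrightarrow> b' \<le> b) \<and> (x j > x t \<longrightarrow> v > x t \<longrightarrow> b' = b)
      \<and> (x j \<le> x t \<longrightarrow> v > x t \<longrightarrow> b \<le> b') \<and> (x j \<le> x t \<longrightarrow> v \<le> x t \<longrightarrow> b' = b)"
    proof (cases "j = i")
      case True
      then show ?thesis using assms by (auto simp: b_def b'_def y_def yt)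
    next
      case False
      then have "y i = x i" by (simp add: y_def)
      then show ?thesis by (simp add: b_def b'_def yt)
    qed
    have kk: "x j > x t \<Longrightarrow> v \<le> x t \<Longrightarrow> k' \<le> k" "x j > x t \<Longrightarrow> v > x t \<Longrightarrow> k' = k"
      "x j \<le> x t \<Longrightarrow> v > x t \<Longrightarrow> k \<le> k'" "x j \<le> x t \<Longrightarrow> v \<le> x t \<Longrightarrow> k' = k"
      using bcond bb kmono[of b' b] kmono[of b b'] by (auto simp: k_def k'_def)
    have "min (abs (x t - x j)) (abs (G k (x t) (min (Min (x ` (agents n - {j}))) (x j)) (max (Max (x ` (agents n - {j}))) (x j)) - x j))
       \<le> min (abs (x t - x j)) (abs (G k' (x t) (min (Min (x ` (agents n - {j}))) v) (max (Max (x ` (agents n - {j}))) v) - x j))"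
      by (rule core[OF kp mmx(3) mmx(4) kk])
    then show ?thesis
      unfolding y_def[symmetric] m1 m2 cost_def fst_conv snd_conv hG[OF bb(1,2)] hG[OF bb(3,4)]
        mmx(1,2) mmy(1,2) S yt k_def k'_def by simp
  qed
qed
end
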